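(* With the notation of the context, let $\alpha^*=\inf_{x\in\Delta}G(x)$. Then there exists $x^*\in\Delta$ with $G(x^* )=\alpha^*$.
   Context: Fix an integer $n\ge2$ and free generators $\xi_1,\dots,\xi_n$ of a free group; throughout $i,j,k\in\{1,\dots,n\}$ and $t,s,p\in\{-1,+1\}$. Let $\Psi$ be the set of reduced words $\xi_i^{2t}$; $\xi_i^t\xi_j^{2s}$ ($i\ne j$); $\xi_i^t\xi_j^s\xi_k^p$ ($i\ne j$, $j\ne k$). Types: type 1 $=\xi_i^{2t}$; type 2 $=\xi_i^t\xi_j^{2s}$; type 3 $=\xi_i^t\xi_j^s\xi_i^t$; type 4 $=\xi_i^t\xi_j^s\xi_i^{-t}$; type 5 $=\xi_i^t\xi_j^s\xi_k^p$ with $i,j,k$ pairwise distinct. For a letter $\xi_a^x$ let $S(\xi_a^x)\subset\Psi$ be the set of words in $\Psi$ beginning with $\xi_a^x$, namely $\{\xi_a^{2x}\}\cup\{\xi_a^x\xi_j^{2s}\}\cup\{\xi_a^x\xi_j^s\xi_k^p\}$; for $a\ne b$ let $S(\xi_a^x\xi_b^y)=\{\xi_a^x\xi_b^{2y}\}\cup\{\xi_a^x\xi_b^y\xi_k^p: k\ne b\}$. A relation $r$ is a pair $(\psi_r,\Psi_r)$ with $\psi_r\in\Psi$, $\Psi_r\subseteq\Psi$; the relations considered are (indices $i_0\ne j_0$, and in type 5 $i_0,j_0,k_0$ pairwise distinct, all signs arbitrary): 1a: $\psi_r=\xi_{i_0}^{2t_0}$, $\Psi_r=\Psi\setminus S(\xi_{i_0}^{t_0})$;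 1b: $\psi_r=\xi_{i_0}^{2t_0}$, $\Psi_r=\Psi\setminus\{\xi_{i_0}^{t_0}\xi_{j_0}^{s_0}\xi_{i_0}^{t_0}\}$; 2a: $\psi_r=\xi_{i_0}^{t_0}\xi_{j_0}^{2s_0}$, $\Psi_r=\Psi\setminus\{\xi_{j_0}^{2s_0}\}$; 2b: $\psi_r=\xi_{i_0}^{t_0}\xi_{j_0}^{2s_0}$, $\Psi_r=\Psi\setminus S(\xi_{i_0}^{t_0}\xi_{j_0}^{s_0})$; 3a: $\psi_r=\xi_{i_0}^{t_0}\xi_{j_0}^{s_0}\xi_{i_0}^{t_0}$, $\Psi_r=\Psi\setminus S(\xi_{j_0}^{s_0}\xi_{i_0}^{t_0})$; 3b: $\psi_r=\xi_{i_0}^{t_0}\xi_{j_0}^{s_0}\xi_{i_0}^{t_0}$, $\Psi_r=\Psi\setminus\{\xi_{i_0}^{2t_0}\}$; 4a: $\psi_r=\xi_{i_0}^{t_0}\xi_{j_0}^{s_0}\xi_{i_0}^{-t_0}$, $\Psi_r=\Psi\setminus S(\xi_{j_0}^{s_0}\xi_{i_0}^{-t_0})$; 4b: $\psi_r=\xi_{i_0}^{t_0}\xi_{j_0}^{s_0}\xi_{i_0}^{-t_0}$, $\Psi_r=S(\xi_{i_0}^{t_0})$; 5a: $\psi_r=\xi_{i_0}^{t_0}\xi_{j_0}^{s_0}\xi_{k_0}^{p_0}$, $\Psi_r=\Psi\setminus S(\xi_{j_0}^{s_0}\xi_{k_0}^{p_0})$; 5b: $\psi_r=\xi_{i_0}^{t_0}\xi_{j_0}^{s_0}\xi_{k_0}^{p_0}$,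 $\Psi_r=\Psi\setminus S(\xi_{i_0}^{t_0}\xi_{k_0}^{p_0})$. Let $\mathcal{G}$ be the collection of all these relations and $\mathcal{F}\subset\mathcal{G}$ the relations of types 1a, 2b, 3a, 4b, 5a. Let $\Delta=\{x\in\mathbb{R}^\Psi: x(\psi)>0\ \forall\psi,\ \sum_{\psi\in\Psi}x(\psi)=1\}$. For a relation $r$ and $x\in\Delta$, put $x_r=x(\psi_r)$, $X_r=\sum_{\psi\in\Psi_r}x(\psi)$ and $f_r(x)=\frac{1-x_r}{x_r}\cdot\frac{1-X_r}{X_r}$. Define $F(x)=\max_{r\in\mathcal{F}}f_r(x)$ and $G(x)=\max_{r\in\mathcal{G}}f_r(x)$ on $\Delta$. *)

theory Defs
  imports Complex_Main
begin

text \<open>A letter xi_i^t is encoded as the pair (i, t) with i in {1..n} and t in {-1, 1}.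
  A reduced word is the list of its letters (so xi_i^{2t} = [(i,t),(i,t)]).\<close>

type_synonym letter = "nat \<times> int"
type_synonym word = "letter list"

definition letters :: "nat \<Rightarrow> letter set" where
  "letters n = {1..n} \<times> {-1, 1}"

definition Psi :: "nat \<Rightarrow> word set" where
  "Psi n =
     {[(i,t),(i,t)] | i t. (i,t) \<in> letters n}
   \<union> {[(i,t),(j,s),(j,s)] | i t j s. (i,t) \<in> letters n \<and> (j,s) \<in> letters n \<and> i \<noteq> j}
   \<union> {[(i,t),(j,s),(k,p)] | i t j s k p. (i,t) \<in> letters n \<and> (j,s) \<in> letters n \<and>
        (k,p) \<in> letters n \<and> i \<noteq> j \<and> j \<noteq> k}"

definition S1 :: "nat \<Rightarrow> letter \<Rightarrow> word set" where
  "S1 n l = {w \<in> Psi n. take 1 w = [l]}"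

definition S2 :: "nat \<Rightarrow> letter \<Rightarrow> letter \<Rightarrow> word set" where
  "S2 n l1 l2 = {w \<in> Psi n. take 2 w = [l1, l2]}"

definition rel1a :: "nat \<Rightarrow> (word \<times> word set) set" where
  "rel1a n = {([(i,t),(i,t)], Psi n - S1 n (i,t)) | i t. (i,t) \<in> letters n}"
definition rel1b :: "nat \<Rightarrow> (word \<times> word set) set" where
  "rel1b n = {([(i,t),(i,t)], Psi n - {[(i,t),(j,s),(i,t)]}) | i t j s.
      (i,t) \<in> letters n \<and> (j,s) \<in> letters n \<and> i \<noteq> j}"
definition rel2a :: "nat \<Rightarrow> (word \<times> word set) set" where
  "rel2a n = {([(i,t),(j,s),(j,s)], Psi n - {[(j,s),(j,s)]}) | i t j s.
      (i,t) \<in> letters n \<and> (j,s) \<in> letters n \<and> i \<noteq> j}"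
definition rel2b :: "nat \<Rightarrow> (word \<times> word set) set" where
  "rel2b n = {([(i,t),(j,s),(j,s)], Psi n - S2 n (i,t) (j,s)) | i t j s.
      (i,t) \<in> letters n \<and> (j,s) \<in> letters n \<and> i \<noteq> j}"
definition rel3a :: "nat \<Rightarrow> (word \<times> word set) set" where
  "rel3a n = {([(i,t),(j,s),(i,t)], Psi n - S2 n (j,s) (i,t)) | i t j s.
      (i,t) \<in> letters n \<and> (j,s) \<in> letters n \<and> i \<noteq> j}"
definition rel3b :: "nat \<Rightarrow> (word \<times> word set) set" where
  "rel3b n = {([(i,t),(j,s),(i,t)], Psi n - {[(i,t),(i,t)]}) | i t j s.
      (i,t) \<in> letters n \<and> (j,s) \<in> letters n \<and> i \<noteq> j}"
definition rel4a :: "nat \<Rightarrow> (word \<times> word set) set" where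
  "rel4a n = {([(i,t),(j,s),(i,-t)], Psi n - S2 n (j,s) (i,-t)) | i t j s.
      (i,t) \<in> letters n \<and> (j,s) \<in> letters n \<and> i \<noteq> j}"
definition rel4b :: "nat \<Rightarrow> (word \<times> word set) set" where
  "rel4b n = {([(i,t),(j,s),(i,-t)], S1 n (i,t)) | i t j s.
      (i,t) \<in> letters n \<and> (j,s) \<in> letters n \<and> i \<noteq> j}"
definition rel5a :: "nat \<Rightarrow> (word \<times> word set) set" where
  "rel5a n = {([(i,t),(j,s),(k,p)], Psi n - S2 n (j,s) (k,p)) | i t j s k p.
      (i,t) \<in> letters n \<and> (j,s) \<in> letters n \<and> (k,p) \<in> letters n \<and>
      i \<noteq> j \<and> j \<noteq> k \<and> i \<noteq> k}"
definition rel5b :: "nat \<Rightarrow> (word \<times> word set) set" where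
  "rel5b n = {([(i,t),(j,s),(k,p)], Psi n - S2 n (i,t) (k,p)) | i t j s k p.
      (i,t) \<in> letters n \<and> (j,s) \<in> letters n \<and> (k,p) \<in> letters n \<and>
      i \<noteq> j \<and> j \<noteq> k \<and> i \<noteq> k}"

definition Grel :: "nat \<Rightarrow> (word \<times> word set) set" where
  "Grel n = rel1a n \<union> rel1b n \<union> rel2a n \<union> rel2b n \<union> rel3a n \<union> rel3b n
            \<union> rel4a n \<union> rel4b n \<union> rel5a n \<union> rel5b n"

definition Frel :: "nat \<Rightarrow> (word \<times> word set) set" where
  "Frel n = rel1a n \<union> rel2b n \<union> rel3a n \<union> rel4b n \<union> rel5a n"

definition Delta :: "nat \<Rightarrow> (word \<Rightarrow> real) set" where
  "Delta n = {x. (\<forall>w \<in> Psi n. x w > 0) \<and> (\<forall>w. w \<notin> Psi n \<longrightarrow> x w = 0)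
                 \<and> (\<Sum>w \<in> Psi n. x w) = 1}"

definition frel :: "(word \<times> word set) \<Rightarrow> (word \<Rightarrow> real) \<Rightarrow> real" where
  "frel r x = (let xr = x (fst r); Xr = (\<Sum>w \<in> snd r. x w)
               in ((1 - xr) / xr) * ((1 - Xr) / Xr))"

definition Ffun :: "nat \<Rightarrow> (word \<Rightarrow> real) \<Rightarrow> real" where
  "Ffun n x = Max ((\<lambda>r. frel r x) ` Frel n)"

definition Gfun :: "nat \<Rightarrow> (word \<Rightarrow> real) \<Rightarrow> real" where
  "Gfun n x = Max ((\<lambda>r. frel r x) ` Grel n)"

end

theory Submission
  imports Defs "HOL-Analysis.Analysis"
begin

lemma subseq_conv:
  fixes x :: "nat \<Rightarrow> 'a \<Rightarrow> real"
  assumes "finite A" "\<And>k w. w \<in> A \<Longrightarrow> x k w \<in> {0..1}"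
  shows "\<exists>\<sigma> l. strict_mono \<sigma> \<and> (\<forall>w\<in>A. (\<lambda>k. x (\<sigma> k) w) \<longlonglongrightarrow> l w)"
  using assms
proof (induction A rule: finite_induct)
  case empty
  show ?case by (rule exI[of _ id]) (auto simp: strict_mono_def)
next
  case (insert a A)
  then obtain \<sigma> l where s: "strict_mono \<sigma>" "\<forall>w\<in>A. (\<lambda>k. x (\<sigma> k) w) \<longlonglongrightarrow> l w" by auto
  have "seq_compact {0..1::real}" by (rule compact_imp_seq_compact) simp
  moreover have "\<forall>k. (\<lambda>k. x (\<sigma> k) a) k \<in> {0..1}" using insert by auto
  ultimately obtain l' \<tau> where t: "strict_mono \<tau>" "((\<lambda>k. x (\<sigma> k) a) \<circ> \<tau>) \<longlonglongrightarrow> l'"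
    by (rule seq_compactE)
  have "strict_mono (\<sigma> \<circ> \<tau>)" using s t by (simp add: strict_mono_def)
  moreover have "\<forall>w\<in>insert a A. (\<lambda>k. x ((\<sigma> \<circ> \<tau>) k) w) \<longlonglongrightarrow> (l(a:=l')) w"
  proof
    fix w assume w: "w \<in> insert a A"
    show "(\<lambda>k. x ((\<sigma> \<circ> \<tau>) k) w) \<longlonglongrightarrow> (l(a:=l')) w"
    proof (cases "w = a")
      case True then show ?thesis using t by (simp add: comp_def)
    next
      case False
      then have "w \<in> A" using w by auto
      then have "((\<lambda>k. x (\<sigma> k) w) \<circ> \<tau>) \<longlonglongrightarrow> l w" using s t LIMSEQ_subseq_LIMSEQ by blast
      then show ?thesis using False by (simp add: comp_def)
    qed
  qed
  ultimately show ?case by blast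
qed

lemma negL: "(i,t) \<in> letters n \<Longrightarrow> (i,-t) \<in> letters n"
  by (auto simp: letters_def)

lemma mem1: "(i,t) \<in> letters n \<Longrightarrow> [(i,t),(i,t)] \<in> Psi n"
  unfolding Psi_def by blast
lemma mem2: "(i,t) \<in> letters n \<Longrightarrow> (j,s) \<in> letters n \<Longrightarrow> i \<noteq> j \<Longrightarrow> [(i,t),(j,s),(j,s)] \<in> Psi n"
  unfolding Psi_def by blast
lemma mem3: "(i,t) \<in> letters n \<Longrightarrow> (j,s) \<in> letters n \<Longrightarrow> (k,p) \<in> letters n \<Longrightarrow> i \<noteq> j \<Longrightarrow> j \<noteq> k
   \<Longrightarrow> [(i,t),(j,s),(k,p)] \<in> Psi n"
  unfolding Psi_def by blast

lemma Psi_letters: "w \<in> Psi n \<Longrightarrow> set w \<subseteq> letters n \<and> length w \<le> 3"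
  unfolding Psi_def by auto

lemma finite_letters: "finite (letters n)"
  by (simp add: letters_def)

lemma finite_Psi: "finite (Psi n)"
proof -
  have "Psi n \<subseteq> {w. set w \<subseteq> letters n \<and> length w \<le> 3}" using Psi_letters by blast
  moreover have "finite {w. set w \<subseteq> letters n \<and> length w \<le> 3}"
    using finite_lists_length_le[OF finite_letters] by simp
  ultimately show ?thesis by (rule finite_subset)
qed

lemma Grel_sub: "r \<in> Grel n \<Longrightarrow> fst r \<in> Psi n \<and> snd r \<subseteq> Psi n"
  unfolding Grel_def rel1a_def rel1b_def rel2a_def rel2b_def rel3a_def rel3b_def rel4a_def rel4b_def
    rel5a_def rel5b_def S1_def
  by (auto intro: mem1 mem2 mem3 mem3[OF _ _ negL])

lemma finite_Grel: "finite (Grel n)"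
proof -
  have "Grel n \<subseteq> Psi n \<times> Pow (Psi n)" using Grel_sub by force
  then show ?thesis using finite_Psi by (meson finite_Pow_iff finite_SigmaI finite_subset)
qed

lemma Grel_ne: "n \<ge> 1 \<Longrightarrow> Grel n \<noteq> {}"
proof -
  assume "n \<ge> 1"
  then have "(1,1) \<in> letters n" by (simp add: letters_def)
  then have "([(1,1),(1,1)], Psi n - S1 n (1,1)) \<in> Grel n"
    unfolding Grel_def rel1a_def by blast
  then show ?thesis by blast
qed


lemma comb:
  assumes n2: "n \<ge> 2"
  and P: "\<And>r. r \<in> Grel n \<Longrightarrow> snd r \<noteq> {} \<Longrightarrow> z (fst r) = 0 \<Longrightarrow> \<forall>w\<in>Psi n - snd r. z w = 0"
  and nz: "\<exists>w\<in>Psi n. z w \<noteq> 0"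
  shows "\<forall>w\<in>Psi n. z w \<noteq> 0"
proof (rule ccontr)
  assume "\<not> ?thesis"
  then obtain \<psi> where \<psi>: "\<psi> \<in> Psi n" "z \<psi> = 0" by auto
  have H: "\<forall>w\<in>Psi n - S1 n (i,t). z w = 0"
    if b: "(i,t) \<in> letters n" "(j,s) \<in> letters n" "i \<noteq> j" "z [(i,t),(j,s),(i,-t)] = 0" for i t j s
  proof -
    have r: "([(i,t),(j,s),(i,-t)], S1 n (i,t)) \<in> Grel n" unfolding Grel_def rel4b_def using b by blast
    have "[(i,t),(i,t)] \<in> S1 n (i,t)" using mem1 b by (simp add: S1_def)
    then show ?thesis using P[OF r] b by auto
  qed
  have T4: False
    if a: "(i,t) \<in> letters n" "(j,s) \<in> letters n" "i \<noteq> j" "z [(i,t),(j,s),(i,-t)] = 0" for i t j s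
  proof -
    have h1: "\<forall>w\<in>Psi n - S1 n (i,t). z w = 0" using H a by blast
    have "[(j,s),(i,-t),(j,-s)] \<in> Psi n" using mem3 negL a by metis
    moreover have "[(j,s),(i,-t),(j,-s)] \<notin> S1 n (i,t)" using a by (simp add: S1_def)
    ultimately have "z [(j,s),(i,-t),(j,-s)] = 0" using h1 by blast
    then have h2: "\<forall>w\<in>Psi n - S1 n (j,s). z w = 0" using H[of j s i "-t"] a negL by auto
    have "\<forall>w\<in>Psi n. z w = 0"
    proof
      fix w assume w: "w \<in> Psi n"
      show "z w = 0"
      proof (cases "w \<in> S1 n (i,t)")
        case True
        then have "w \<notin> S1 n (j,s)" using a by (auto simp: S1_def)
        then show ?thesis using h2 w by blast
      next
        case False
        then show ?thesis using h1 w by blast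
      qed
    qed
    then show False using nz by blast
  qed
  have T1: False if a: "(i,t) \<in> letters n" "z [(i,t),(i,t)] = 0" for i t
  proof -
    have "(if i = 1 then 2 else 1) \<in> {1..n} \<and> (if i = 1 then 2 else 1) \<noteq> i" using n2 by auto
    then obtain j where j: "j \<in> {1..n}" "j \<noteq> i" by blast
    have jl: "(j,1) \<in> letters n" using j by (simp add: letters_def)
    have r: "([(i,t),(i,t)], Psi n - S1 n (i,t)) \<in> Grel n" unfolding Grel_def rel1a_def using a by blast
    have "[(j,1),(j,1)] \<in> Psi n - S1 n (i,t)" using mem1[OF jl] j by (simp add: S1_def)
    then have "Psi n - S1 n (i,t) \<noteq> {}" by blast
    then have "\<forall>w\<in>Psi n - (Psi n - S1 n (i,t)). z w = 0" using P[OF r] a by simp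
    then have Z: "\<forall>w\<in>S1 n (i,t). z w = 0" by (auto simp: S1_def)
    have "[(i,t),(j,1),(i,-t)] \<in> Psi n" using mem3 negL a jl j by metis
    then have "z [(i,t),(j,1),(i,-t)] = 0" using Z by (simp add: S1_def)
    then show False using T4 a jl j by blast
  qed
  from \<psi>(1) show False unfolding Psi_def
  proof (elim UnE CollectE exE conjE)
    fix i t assume "\<psi> = [(i,t),(i,t)]" "(i,t) \<in> letters n"
    then show False using T1 \<psi> by blast
  next
    fix i t j s assume e: "\<psi> = [(i,t),(j,s),(j,s)]" "(i,t) \<in> letters n" "(j,s) \<in> letters n" "i \<noteq> j"
    have r: "([(i,t),(j,s),(j,s)], Psi n - S2 n (i,t) (j,s)) \<in> Grel n" unfolding Grel_def rel2b_def using e by blast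
    have "[(i,t),(i,t)] \<in> Psi n - S2 n (i,t) (j,s)" using mem1 e by (simp add: S2_def)
    then have "Psi n - S2 n (i,t) (j,s) \<noteq> {}" by blast
    then have "\<forall>w\<in>Psi n - (Psi n - S2 n (i,t) (j,s)). z w = 0" using P[OF r] e \<psi> by simp
    then have Z: "\<forall>w\<in>S2 n (i,t) (j,s). z w = 0" by (auto simp: S2_def)
    have "[(i,t),(j,s),(i,-t)] \<in> Psi n" using mem3 negL e by metis
    then have "z [(i,t),(j,s),(i,-t)] = 0" using Z by (simp add: S2_def)
    then show False using T4 e by blast
  next
    fix i t j s k p assume e: "\<psi> = [(i,t),(j,s),(k,p)]" "(i,t) \<in> letters n" "(j,s) \<in> letters n"
      "(k,p) \<in> letters n" "i \<noteq> j" "j \<noteq> k"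
    show False
    proof (cases "k = i")
      case ki: True
      show False
      proof (cases "p = t")
        case True
        have r: "([(i,t),(j,s),(i,t)], Psi n - {[(i,t),(i,t)]}) \<in> Grel n" unfolding Grel_def rel3b_def using e by blast
        have "t \<noteq> -t" using e by (auto simp: letters_def)
        then have "[(i,-t),(i,-t)] \<in> Psi n - {[(i,t),(i,t)]}" using mem1 negL e by auto
        then have "z [(i,t),(i,t)] = 0" using P[OF r] e \<psi> ki True mem1 by auto
        then show False using T1 e by blast
      next
        case False
        then have "p = -t" using e ki by (auto simp: letters_def)
        then show False using T4 e ki \<psi> by blast
      qed
    next
      case False
      have r: "([(i,t),(j,s),(k,p)], Psi n - S2 n (i,t) (k,p)) \<in> Grel n" unfolding Grel_def rel5b_def using e False by blast
      have "[(i,t),(i,t)] \<in> Psi n - S2 n (i,t) (k,p)" using mem1 e False by (simp add: S2_def)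
      then have "Psi n - S2 n (i,t) (k,p) \<noteq> {}" by blast
    then have "\<forall>w\<in>Psi n - (Psi n - S2 n (i,t) (k,p)). z w = 0" using P[OF r] e \<psi> by simp
    then have Z: "\<forall>w\<in>S2 n (i,t) (k,p). z w = 0" by (auto simp: S2_def)
      have "[(i,t),(k,p),(i,-t)] \<in> Psi n" using mem3 negL e False by metis
      then have "z [(i,t),(k,p),(i,-t)] = 0" using Z by (simp add: S2_def)
      then show False using T4 e False by blast
    qed
  qed
qed

theorem lemma5p1:
  fixes n :: nat
  assumes "n \<ge> 2"
  shows "\<exists>x \<in> Delta n. Gfun n x = (INF y \<in> Delta n. Gfun n y)"
proof -
  define D where "D = Delta n"
  define \<alpha> where "\<alpha> = (INF y \<in> D. Gfun n y)"
  have finP: "finite (Psi n)" by (rule finite_Psi)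
  have l11: "(1,1) \<in> letters n" using assms by (simp add: letters_def)
  have PsiNE: "Psi n \<noteq> {}" using mem1[OF l11] by blast
  have cardP: "card (Psi n) > 0" using finP PsiNE card_gt_0_iff by blast
  define u where "u w = (if w \<in> Psi n then 1 / real (card (Psi n)) else 0)" for w
  have "u \<in> D" unfolding D_def Delta_def u_def using cardP finP PsiNE by simp
  then have Dne: "D \<noteq> {}" by blast
  have Dprops: "\<forall>w\<in>Psi n. y w > 0" "\<forall>w. w \<notin> Psi n \<longrightarrow> y w = 0" "(\<Sum>w\<in>Psi n. y w) = 1"
    if "y \<in> D" for y
    using that unfolding D_def Delta_def by auto
  have ynn: "0 \<le> y w" if "y \<in> D" for y w
    using Dprops[OF that] by (cases "w \<in> Psi n") auto
  have sumle: "(\<Sum>w\<in>A. y w) \<le> 1" if y: "y \<in> D" for y A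
  proof (cases "finite A")
    case True
    have "(\<Sum>w\<in>A. y w) = (\<Sum>w\<in>A \<inter> Psi n. y w)"
      by (rule sum.mono_neutral_right) (use True Dprops[OF y] in auto)
    also have "\<dots> \<le> (\<Sum>w\<in>Psi n. y w)"
      by (rule sum_mono2) (use finP ynn[OF y] in auto)
    finally show ?thesis using Dprops(3)[OF y] by simp
  next
    case False
    then show ?thesis by simp
  qed
  have yle1: "y w \<le> 1" if "y \<in> D" for y w
    using sumle[OF that, of "{w}"] by simp
  have frnn: "0 \<le> frel r y" if y: "y \<in> D" for r y
  proof -
    have a: "0 \<le> y (fst r)" "y (fst r) \<le> 1" using ynn[OF y] yle1[OF y] by auto
    have b: "0 \<le> (\<Sum>w\<in>snd r. y w)" "(\<Sum>w\<in>snd r. y w) \<le> 1"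
      using sum_nonneg[of "snd r" y] ynn[OF y] sumle[OF y] by auto
    show ?thesis unfolding frel_def Let_def using a b by (simp add: divide_nonneg_nonneg)
  qed
  have finG: "finite (Grel n)" by (rule finite_Grel)
  have GNE: "Grel n \<noteq> {}" using Grel_ne assms by simp
  have frle: "frel r y \<le> Gfun n y" if "r \<in> Grel n" for r y
    unfolding Gfun_def by (rule Max_ge) (use finG that in auto)
  have Gnn: "0 \<le> Gfun n y" if "y \<in> D" for y
  proof -
    obtain r where "r \<in> Grel n" using GNE by blast
    then show ?thesis using frle frnn[OF that] order_trans by blast
  qed
  have bdd: "bdd_below (Gfun n ` D)" by (rule bdd_belowI[of _ 0]) (use Gnn in auto)
  have \<alpha>nn: "0 \<le> \<alpha>" unfolding \<alpha>_def by (rule cINF_greatest[OF Dne Gnn])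
  have \<alpha>le: "\<alpha> \<le> Gfun n y" if "y \<in> D" for y
    unfolding \<alpha>_def by (rule cINF_lower[OF bdd that])
  have ex: "\<forall>k. \<exists>y. y \<in> D \<and> Gfun n y < \<alpha> + inverse (real (Suc k))"
  proof
    fix k
    have "Inf (Gfun n ` D) < \<alpha> + inverse (real (Suc k))" unfolding \<alpha>_def by simp
    then obtain g where "g \<in> Gfun n ` D" "g < \<alpha> + inverse (real (Suc k))"
      using cInf_lessD Dne by (metis image_is_empty)
    then show "\<exists>y. y \<in> D \<and> Gfun n y < \<alpha> + inverse (real (Suc k))" by blast
  qed
  then obtain x where x: "\<forall>k. x k \<in> D \<and> Gfun n (x k) < \<alpha> + inverse (real (Suc k))" by metis
  have xD: "x k \<in> D" for k using x by blast
  have Gx: "(\<lambda>k. Gfun n (x k)) \<longlonglongrightarrow> \<alpha>"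
  proof (rule tendsto_sandwich[of "\<lambda>k. \<alpha>" _ _ "\<lambda>k. \<alpha> + inverse (real (Suc k))"])
    show "\<forall>\<^sub>F k in sequentially. \<alpha> \<le> Gfun n (x k)" using \<alpha>le xD by simp
    show "\<forall>\<^sub>F k in sequentially. Gfun n (x k) \<le> \<alpha> + inverse (real (Suc k))"
      using x by (simp add: less_imp_le)
    show "(\<lambda>k. \<alpha>) \<longlonglongrightarrow> \<alpha>" by simp
    have "(\<lambda>k. \<alpha> + inverse (real (Suc k))) \<longlonglongrightarrow> \<alpha> + 0"
      by (rule tendsto_add[OF tendsto_const LIMSEQ_inverse_real_of_nat])
    then show "(\<lambda>k. \<alpha> + inverse (real (Suc k))) \<longlonglongrightarrow> \<alpha>" by simp
  qed
  have x01: "x k w \<in> {0..1}" for k w using ynn[OF xD] yle1[OF xD] by auto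
  obtain \<sigma> l where \<sigma>: "strict_mono \<sigma>" "\<forall>w\<in>Psi n. (\<lambda>k. x (\<sigma> k) w) \<longlonglongrightarrow> l w"
    using subseq_conv[OF finP, of x] x01 by blast
  define z where "z w = (if w \<in> Psi n then l w else 0)" for w
  have zlim: "(\<lambda>k. x (\<sigma> k) w) \<longlonglongrightarrow> z w" for w
  proof (cases "w \<in> Psi n")
    case True then show ?thesis using \<sigma> by (simp add: z_def)
  next
    case False then show ?thesis using Dprops(2)[OF xD] by (simp add: z_def)
  qed
  have z0: "0 \<le> z w" for w
    by (rule LIMSEQ_le_const[OF zlim]) (use ynn[OF xD] in auto)
  have zsum: "(\<Sum>w\<in>Psi n. z w) = 1"
  proof -
    have "(\<lambda>k. \<Sum>w\<in>Psi n. x (\<sigma> k) w) \<longlonglongrightarrow> (\<Sum>w\<in>Psi n. z w)"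
      by (rule tendsto_sum) (rule zlim)
    moreover have "(\<lambda>k. \<Sum>w\<in>Psi n. x (\<sigma> k) w) = (\<lambda>k. 1)" using Dprops(3)[OF xD] by simp
    ultimately have "(\<lambda>k. 1::real) \<longlonglongrightarrow> (\<Sum>w\<in>Psi n. z w)" by simp
    then show ?thesis using LIMSEQ_unique tendsto_const by metis
  qed
  have G\<sigma>: "(\<lambda>k. Gfun n (x (\<sigma> k))) \<longlonglongrightarrow> \<alpha>"
    using LIMSEQ_subseq_LIMSEQ[OF Gx \<sigma>(1)] by (simp add: comp_def)
  define M where "M = \<alpha> + 1"
  have M0: "0 \<le> M" using \<alpha>nn M_def by simp
  have xM: "Gfun n (x k) \<le> M" for k
  proof -
    have "inverse (real (Suc k)) \<le> 1" by (simp add: field_simps)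
    then show ?thesis using x M_def by (smt (verit))
  qed
  have Pr: "\<forall>w\<in>Psi n - snd r. z w = 0" if r: "r \<in> Grel n" "snd r \<noteq> {}" "z (fst r) = 0" for r
  proof -
    obtain \<psi> Q where rr: "r = (\<psi>, Q)" by (cases r)
    have \<psi>P: "\<psi> \<in> Psi n" and QP: "Q \<subseteq> Psi n" using Grel_sub[OF r(1)] rr by auto
    have Qne: "Q \<noteq> {}" using r rr by simp
    have finQ: "finite Q" using QP finP finite_subset by blast
    define a where "a k = x (\<sigma> k) \<psi>" for k
    define X where "X k = (\<Sum>w\<in>Q. x (\<sigma> k) w)" for k
    have apos: "a k > 0" for k using Dprops(1)[OF xD] \<psi>P a_def by simp
    have Xpos: "X k > 0" for k unfolding X_def
      by (rule sum_pos[OF finQ Qne]) (use Dprops(1)[OF xD] QP in auto)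
    have Xle: "X k \<le> 1" for k unfolding X_def by (rule sumle[OF xD])
    have ineq: "(1 - a k) * (1 - X k) \<le> M * a k" for k
    proof -
      have "frel r (x (\<sigma> k)) \<le> M" using frle[OF r(1)] xM order_trans by blast
      then have "((1 - a k) / a k) * ((1 - X k) / X k) \<le> M"
        unfolding frel_def Let_def rr a_def X_def by simp
      then have "((1 - a k) * (1 - X k)) / (a k * X k) \<le> M" by simp
      then have "(1 - a k) * (1 - X k) \<le> M * (a k * X k)"
        using apos[of k] Xpos[of k] by (simp add: pos_divide_le_eq)
      also have "\<dots> \<le> M * a k"
        using M0 apos[of k] Xle[of k] by (intro mult_left_mono) (simp_all add: mult_left_le)
      finally show ?thesis .
    qed
    have L1: "(\<lambda>k. (1 - a k) * (1 - X k)) \<longlonglongrightarrow> (1 - 0) * (1 - (\<Sum>w\<in>Q. z w))"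
      unfolding a_def X_def
      by (intro tendsto_intros tendsto_sum zlim) (use zlim[of \<psi>] r rr in simp)
    have L2: "(\<lambda>k. M * a k) \<longlonglongrightarrow> M * 0"
      unfolding a_def by (intro tendsto_intros) (use zlim[of \<psi>] r rr in simp)
    have "(1 - 0) * (1 - (\<Sum>w\<in>Q. z w)) \<le> M * 0"
      by (rule LIMSEQ_le[OF L1 L2]) (use ineq in auto)
    then have s1: "1 \<le> (\<Sum>w\<in>Q. z w)" by simp
    have "(\<Sum>w\<in>Psi n - Q. z w) = (\<Sum>w\<in>Psi n. z w) - (\<Sum>w\<in>Q. z w)"
      by (rule sum_diff[OF finP QP])
    then have "(\<Sum>w\<in>Psi n - Q. z w) \<le> 0" using zsum s1 by simp
    moreover have "0 \<le> (\<Sum>w\<in>Psi n - Q. z w)" using z0 by (simp add: sum_nonneg)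
    ultimately have "(\<Sum>w\<in>Psi n - Q. z w) = 0" by simp
    then have "\<forall>w\<in>Psi n - Q. z w = 0" using sum_nonneg_eq_0_iff[of "Psi n - Q" z] finP z0 by simp
    then show ?thesis using rr by simp
  qed
  have nz: "\<exists>w\<in>Psi n. z w \<noteq> 0" using zsum by (metis sum.neutral zero_neq_one)
  have zpos: "\<forall>w\<in>Psi n. z w \<noteq> 0" by (rule comb[OF assms Pr nz])
  have zD: "z \<in> D" unfolding D_def Delta_def
  proof (intro CollectI conjI ballI allI impI)
    fix w assume "w \<in> Psi n" then show "0 < z w" using z0[of w] zpos by (simp add: less_le)
  next
    fix w assume "w \<notin> Psi n" then show "z w = 0" by (simp add: z_def)
  qed (rule zsum)
  have "Gfun n z \<le> \<alpha>"
    unfolding Gfun_def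
  proof (rule Max.boundedI)
    show "finite ((\<lambda>r. frel r z) ` Grel n)" using finG by simp
    show "(\<lambda>r. frel r z) ` Grel n \<noteq> {}" using GNE by simp
    fix g assume "g \<in> (\<lambda>r. frel r z) ` Grel n"
    then obtain r where r: "r \<in> Grel n" "g = frel r z" by blast
    show "g \<le> \<alpha>"
    proof (cases "z (fst r) = 0 \<or> (\<Sum>w\<in>snd r. z w) = 0")
      case True
      then have "frel r z = 0" unfolding frel_def Let_def by auto
      then show ?thesis using r \<alpha>nn by simp
    next
      case False
      then have ne: "z (fst r) \<noteq> 0" "(\<Sum>w\<in>snd r. z w) \<noteq> 0" by auto
      have "(\<lambda>k. frel r (x (\<sigma> k))) \<longlonglongrightarrow> frel r z"
        unfolding frel_def Let_def
        by (intro tendsto_intros tendsto_sum zlim) (use ne in auto)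
      moreover have "\<forall>k. frel r (x (\<sigma> k)) \<le> Gfun n (x (\<sigma> k))" using frle[OF r(1)] by blast
      ultimately have "frel r z \<le> \<alpha>" using LIMSEQ_le[OF _ G\<sigma>] by blast
      then show ?thesis using r by simp
    qed
  qed
  moreover have "\<alpha> \<le> Gfun n z" by (rule \<alpha>le[OF zD])
  ultimately have "Gfun n z = \<alpha>" by simp
  then show ?thesis using zD unfolding D_def \<alpha>_def by blast
qed

end
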